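(* Let $q$ be a prime power. For any real $R$ with $0 \leq R \leq \frac{1}{2}\log_q\!\left(\frac{q^2}{q^2-q+1}\right)$, there exists an infinite sequence of minimal linear $[n,k]$ codes over $\mathbb{F}_q$ (with lengths $n$ unbounded) whose rates $k/n$ attain $R$ (i.e. $k/n \to R$ along the sequence, with $k/n \le \frac{1}{2}\log_q\!\left(\frac{q^2}{q^2-q+1}\right)$).
   Context: A linear $[n,k]$ code over $\mathbb{F}_q$ is a $k$-dimensional subspace of $\mathbb{F}_q^n$; its rate is $k/n$. The support of $c \in \mathbb{F}_q^n$ is $\mathrm{supp}(c) = \{ i \in \{1,\dots,n\} : c_i \neq 0\}$. A codeword $c \in C$ is minimal if for every $c' \in C$, $\mathrm{supp}(c') \subseteq \mathrm{supp}(c)$ implies that $c$ and $c'$ are linearly dependent. A linear code $C$ is minimal if every nonzero codeword of $C$ is minimal. *)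

theory Defs
  imports "HOL-Analysis.Analysis" "HOL-Library.Function_Algebras"
begin

text \<open>Vectors of length n over a field are modelled as functions nat => 'a that
vanish outside {0..<n}. Scalar multiplication is componentwise.\<close>

definition fscale :: "'a::field \<Rightarrow> (nat \<Rightarrow> 'a) \<Rightarrow> (nat \<Rightarrow> 'a)" where
  "fscale c x = (\<lambda>i. c * x i)"

lemma fscale_vector_space: "vector_space fscale"
  by unfold_locales (auto simp: fscale_def fun_eq_iff algebra_simps)

definition ambient :: "nat \<Rightarrow> (nat \<Rightarrow> 'a::zero) set" where
  "ambient n = {x. \<forall>i. n \<le> i \<longrightarrow> x i = 0}"

definition linear_code :: "nat \<Rightarrow> nat \<Rightarrow> (nat \<Rightarrow> 'a::field) set \<Rightarrow> bool" where
  "linear_code n k C \<longleftrightarrow> C \<subseteq> ambient n \<and> module.subspace fscale C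
      \<and> vector_space.dim fscale C = k"

definition supp :: "nat \<Rightarrow> (nat \<Rightarrow> 'a::zero) \<Rightarrow> nat set" where
  "supp n c = {i \<in> {1..n}. c (i - 1) \<noteq> 0}"

definition lin_dep2 :: "(nat \<Rightarrow> 'a::field) \<Rightarrow> (nat \<Rightarrow> 'a) \<Rightarrow> bool" where
  "lin_dep2 c c' \<longleftrightarrow> (\<exists>a b. (a \<noteq> 0 \<or> b \<noteq> 0) \<and> fscale a c + fscale b c' = 0)"

definition minimal_codeword :: "nat \<Rightarrow> (nat \<Rightarrow> 'a::field) set \<Rightarrow> (nat \<Rightarrow> 'a) \<Rightarrow> bool" where
  "minimal_codeword n C c \<longleftrightarrow> c \<in> C \<and> (\<forall>c'\<in>C. supp n c' \<subseteq> supp n c \<longrightarrow> lin_dep2 c c')"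

definition minimal_code :: "nat \<Rightarrow> (nat \<Rightarrow> 'a::field) set \<Rightarrow> bool" where
  "minimal_code n C \<longleftrightarrow> (\<forall>c\<in>C. c \<noteq> 0 \<longrightarrow> minimal_codeword n C c)"

end

theory Submission
  imports Defs
begin


definition amb :: "nat \<Rightarrow> 'b set \<Rightarrow> (nat \<Rightarrow> 'b::zero) set" where
  "amb n A = {f. (\<forall>i<n. f i \<in> A) \<and> (\<forall>i\<ge>n. f i = 0)}"

lemma amb_Suc: "amb (Suc n) A = (\<lambda>(f,a). f(n:=a)) ` (amb n A \<times> A)"
proof (rule set_eqI, rule iffI)
  fix g assume g: "g \<in> amb (Suc n) A"
  have "g = (g(n:=0))(n := g n)" by simp
  moreover have "g(n:=0) \<in> amb n A" "g n \<in> A" using g by (auto simp: amb_def)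
  ultimately show "g \<in> (\<lambda>(f,a). f(n:=a)) ` (amb n A \<times> A)"
    by (auto intro!: image_eqI[where x="(g(n:=0), g n)"])
next
  fix g assume "g \<in> (\<lambda>(f,a). f(n:=a)) ` (amb n A \<times> A)"
  then show "g \<in> amb (Suc n) A" by (auto simp: amb_def less_Suc_eq)
qed

lemma amb_inj: "inj_on (\<lambda>(f,a). f(n:=a)) (amb n A \<times> A)"
proof (rule inj_onI, clarify)
  fix f a g b assume "f \<in> amb n A" "g \<in> amb n A" and e: "f(n := a) = g(n := b)"
  then have "a = b" by (metis fun_upd_same)
  moreover have "f = g"
  proof
    fix i show "f i = g i"
      using e \<open>f \<in> amb n A\<close> \<open>g \<in> amb n A\<close>
      by (cases "i = n") (auto simp: amb_def dest: fun_cong[where x=i])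
  qed
  ultimately show "f = g \<and> a = b" by simp
qed

lemma card_amb: "finite A \<Longrightarrow> finite (amb n A) \<and> card (amb n A) = card A ^ n"
proof (induction n)
  case 0
  have "amb 0 A = {0}" by (auto simp: amb_def)
  then show ?case by simp
next
  case (Suc n)
  then show ?case
    by (simp add: amb_Suc card_image[OF amb_inj] card_cartesian_product)
qed

lemma ambient_amb: "ambient n = amb n UNIV"
  by (auto simp: ambient_def amb_def)

definition dot :: "nat \<Rightarrow> (nat \<Rightarrow> 'a::field) \<Rightarrow> (nat \<Rightarrow> 'a) \<Rightarrow> 'a" where
  "dot k r u = (\<Sum>j<k. r j * u j)"

lemma dot_add: "dot k (r + s) u = dot k r u + dot k s u"
  by (simp add: dot_def distrib_right sum.distrib)
lemma dot_diff: "dot k (r - s) u = dot k r u - dot k s u"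
  by (simp add: dot_def left_diff_distrib sum_subtractf)

lemma minor_exists:
  fixes u v :: "nat \<Rightarrow> 'a::field"
  assumes u: "u \<in> ambient k" and v: "v \<in> ambient k" and nd: "\<not> lin_dep2 u v"
  shows "\<exists>j1<k. \<exists>j2<k. u j1 * v j2 - u j2 * v j1 \<noteq> 0"
proof (rule ccontr)
  assume H: "\<not> ?thesis"
  show False
  proof (cases "\<forall>j<k. v j = 0")
    case True
    have "v = 0"
    proof
      fix i show "v i = 0 i" using True v by (cases "i < k") (auto simp: ambient_def)
    qed
    then have "lin_dep2 u v" unfolding lin_dep2_def
      by (intro exI[of _ 0] exI[of _ 1]) (auto simp: fscale_def fun_eq_iff)
    with nd show False by simp
  next
    case False
    then obtain j0 where j0: "j0 < k" "v j0 \<noteq> 0" by auto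
    have "fscale (v j0) u + fscale (- u j0) v = 0"
    proof
      fix i show "(fscale (v j0) u + fscale (- u j0) v) i = 0 i"
      proof (cases "i < k")
        case True
        with H j0 have "u i * v j0 - u j0 * v i = 0" by auto
        then show ?thesis by (simp add: fscale_def algebra_simps)
      next
        case False
        then show ?thesis using u v by (simp add: fscale_def ambient_def)
      qed
    qed
    then have "lin_dep2 u v" unfolding lin_dep2_def using j0 by blast
    with nd show False by simp
  qed
qed

lemma solve_exists:
  fixes u v :: "nat \<Rightarrow> 'a::field"
  assumes u: "u \<in> ambient k" and v: "v \<in> ambient k" and nd: "\<not> lin_dep2 u v"
  shows "\<exists>r\<in>ambient k. dot k r u = a \<and> dot k r v = b"
proof -
  obtain j1 j2 where j: "j1 < k" "j2 < k" and d: "u j1 * v j2 - u j2 * v j1 \<noteq> 0"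
    using minor_exists[OF assms] by blast
  have ne: "j1 \<noteq> j2" using d by auto
  define \<delta> where "\<delta> = u j1 * v j2 - u j2 * v j1"
  define x where "x = (a * v j2 - b * u j2) / \<delta>"
  define y where "y = (b * u j1 - a * v j1) / \<delta>"
  define r where "r = (\<lambda>i. (if i = j1 then x else 0) + (if i = j2 then y else (0::'a)))"
  have r: "r \<in> ambient k" using j by (auto simp: r_def ambient_def)
  have dr: "dot k r w = x * w j1 + y * w j2" for w
  proof -
    have "dot k r w = (\<Sum>j<k. (if j = j1 then x * w j else 0) + (if j = j2 then y * w j else 0))"
      unfolding dot_def r_def by (intro sum.cong) (auto simp: distrib_right)
    also have "\<dots> = (\<Sum>j<k. (if j = j1 then x * w j else 0)) + (\<Sum>j<k. (if j = j2 then y * w j else 0))"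
      by (rule sum.distrib)
    also have "\<dots> = x * w j1 + y * w j2" using j by simp
    finally show ?thesis .
  qed
  have dn: "\<delta> \<noteq> 0" using d by (simp add: \<delta>_def)
  have "x * u j1 + y * u j2 = ((a * v j2 - b * u j2) * u j1 + (b * u j1 - a * v j1) * u j2) / \<delta>"
    unfolding x_def y_def by (simp add: add_divide_distrib)
  also have "(a * v j2 - b * u j2) * u j1 + (b * u j1 - a * v j1) * u j2 = a * \<delta>"
    unfolding \<delta>_def by (simp add: algebra_simps)
  finally have e1: "x * u j1 + y * u j2 = a" using dn by simp
  have "x * v j1 + y * v j2 = ((a * v j2 - b * u j2) * v j1 + (b * u j1 - a * v j1) * v j2) / \<delta>"
    unfolding x_def y_def by (simp add: add_divide_distrib)
  moreover have "(a * v j2 - b * u j2) * v j1 + (b * u j1 - a * v j1) * v j2 = b * \<delta>"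
    unfolding \<delta>_def by (simp add: algebra_simps)
  ultimately have "x * v j1 + y * v j2 = b" using dn by simp
  then show ?thesis using e1 r dr by blast
qed



lemma ambient_add: "r \<in> ambient k \<Longrightarrow> s \<in> ambient k \<Longrightarrow> (r::nat\<Rightarrow>'a::monoid_add) + s \<in> ambient k"
  by (auto simp: ambient_def)
lemma ambient_diff: "r \<in> ambient k \<Longrightarrow> s \<in> ambient k \<Longrightarrow> (r::nat\<Rightarrow>'a::ab_group_add) - s \<in> ambient k"
  by (auto simp: ambient_def)

lemma ambient_finite_card:
  "finite (ambient k :: (nat \<Rightarrow> 'a::{finite,zero}) set) \<and> card (ambient k :: (nat \<Rightarrow> 'a) set) = CARD('a) ^ k"
  using card_amb[of "UNIV :: 'a set" k] by (simp add: ambient_amb)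

lemma fiber_count:
  fixes u v :: "nat \<Rightarrow> 'a::{finite,field}"
  assumes u: "u \<in> ambient k" and v: "v \<in> ambient k" and nd: "\<not> lin_dep2 u v"
  shows "card {r\<in>ambient k. dot k r u = 0 \<and> dot k r v \<noteq> 0} * CARD('a)^2 = (CARD('a) - 1) * CARD('a)^k"
proof -
  define V where "V = (ambient k :: (nat \<Rightarrow> 'a) set)"
  have fV: "finite V" and cV: "card V = CARD('a)^k" using ambient_finite_card unfolding V_def by auto
  define F where "F y = {r\<in>V. (dot k r u, dot k r v) = y}" for y
  define c where "c = card (F (0,0))"
  have fF: "finite (F y)" for y using fV by (simp add: F_def)
  have cF: "card (F y) = c" for y
  proof -
    obtain r0 where r0: "r0 \<in> V" "dot k r0 u = fst y" "dot k r0 v = snd y"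
      using solve_exists[OF u v nd] unfolding V_def by blast
    have "F y = (\<lambda>r. r + r0) ` F (0,0)"
    proof (rule set_eqI, rule iffI)
      fix r assume r: "r \<in> F y"
      then have "r - r0 \<in> F (0,0)" using r0
        by (auto simp: F_def V_def ambient_diff dot_diff)
      moreover have "r = (r - r0) + r0" by simp
      ultimately show "r \<in> (\<lambda>r. r + r0) ` F (0,0)" by blast
    next
      fix r assume "r \<in> (\<lambda>r. r + r0) ` F (0,0)"
      then show "r \<in> F y" using r0
        by (cases y) (auto simp: F_def V_def ambient_add dot_add)
    qed
    moreover have "inj_on (\<lambda>r. r + r0) (F (0,0))" by (auto intro: inj_onI)
    ultimately show ?thesis unfolding c_def by (simp add: card_image)
  qed
  have "V = (\<Union>y\<in>UNIV. F y)" by (auto simp: F_def)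
  then have "card V = (\<Sum>y\<in>(UNIV::('a\<times>'a) set). card (F y))"
    using fF by (simp add: card_UN_disjoint) (rule card_UN_disjoint, auto simp: F_def)
  then have eq1: "CARD('a)^k = CARD('a)^2 * c" using cV cF
    by (simp add: card_cartesian_product power2_eq_square)
  have "{r\<in>V. dot k r u = 0 \<and> dot k r v \<noteq> 0} = (\<Union>b\<in>UNIV-{0}. F (0,b))"
    by (auto simp: F_def)
  then have "card {r\<in>V. dot k r u = 0 \<and> dot k r v \<noteq> 0} = (\<Sum>b\<in>UNIV-{0::'a}. card (F (0,b)))"
    using fF by (simp) (rule card_UN_disjoint, auto simp: F_def)
  also have "\<dots> = (CARD('a) - 1) * c" using cF by (simp add: card_Diff_singleton)
  finally show ?thesis using eq1 unfolding V_def by (simp add: algebra_simps)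
qed



lemma sum_fun_app: "(sum f A) i = sum (\<lambda>a. f a i) A"
  by (induction A rule: infinite_finite_induct) auto

lemma good_exists:
  fixes n k :: nat
  assumes cond: "CARD('a)^(2*k) * (CARD('a)^2 - CARD('a) + 1)^n \<le> CARD('a)^(2*n)"
  shows "\<exists>G \<in> amb n (ambient k :: (nat\<Rightarrow>'a::{finite,field}) set). \<forall>u\<in>ambient k. \<forall>v\<in>ambient k.
           \<not> lin_dep2 u v \<longrightarrow> (\<exists>i<n. dot k (G i) u = 0 \<and> dot k (G i) v \<noteq> 0)"
proof -
  define q where "q = CARD('a)"
  have q2: "q \<ge> 2" unfolding q_def
  proof -
    have "card {0::'a, 1} \<le> CARD('a)" by (intro card_mono) auto
    then show "CARD('a) \<ge> 2" by simp
  qed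
  define V where "V = (ambient k :: (nat \<Rightarrow> 'a) set)"
  have fV: "finite V" and cV: "card V = q^k" using ambient_finite_card unfolding V_def q_def by auto
  define Gs where "Gs = amb n V"
  have fGs: "finite Gs" and cGs: "card Gs = (q^k)^n" using card_amb[OF fV, of n] cV unfolding Gs_def by auto
  define P where "P = {p\<in>V\<times>V. \<not> lin_dep2 (fst p) (snd p)}"
  define S where "S p = {r\<in>V. dot k r (snd p) \<noteq> 0 \<longrightarrow> dot k r (fst p) \<noteq> 0}" for p
  define Bad where "Bad = (\<Union>p\<in>P. amb n (S p))"
  define Y where "Y = (q^k * (q^2 - q + 1))^n"
  have fP: "finite P" using fV unfolding P_def by simp
  have "(0,0) \<in> V \<times> V" by (auto simp: V_def ambient_def)
  moreover have "(0,0) \<notin> P" unfolding P_def lin_dep2_def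
    by (auto intro!: exI[of _ 1] simp: fscale_def fun_eq_iff)
  moreover have "P \<subseteq> V \<times> V" unfolding P_def by auto
  ultimately have "P \<subset> V \<times> V" by blast
  then have "card P < card (V \<times> V)" using fV by (intro psubset_card_mono) auto
  then have cP: "card P < q^(2*k)" using cV by (simp add: card_cartesian_product power_add mult_2)
  have cS: "card (S p) ^ n * q^(2*n) = Y" if p: "p \<in> P" for p
  proof -
    obtain u v where uv: "p = (u,v)" by (cases p)
    have u: "u \<in> ambient k" and v: "v \<in> ambient k" and nd: "\<not> lin_dep2 u v"
      using p uv unfolding P_def V_def by auto
    define T where "T = {r\<in>ambient k. dot k r u = 0 \<and> dot k r v \<noteq> 0}"
    have cT: "card T * q^2 = (q - 1) * q^k" using fiber_count[OF u v nd] unfolding T_def q_def .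
    have "S p = V - T" unfolding S_def T_def uv V_def by auto
    moreover have "T \<subseteq> V" unfolding T_def V_def by auto
    ultimately have "card (S p) = card V - card T" "card T \<le> card V" using fV
      by (auto simp: card_Diff_subset finite_subset card_mono)
    then have "card (S p) + card T = q^k" using cV by simp
    then have e: "card (S p) * q^2 + card T * q^2 = q^k * q^2" by (metis add_mult_distrib)
    obtain m where m: "q = Suc m" using q2 by (cases q) auto
    have "q^2 - q + 1 = m*m + m + 1" unfolding m by (simp add: power2_eq_square)
    moreover have "card (S p) * q^2 + m * q^k = q^k * (m*m + m + 1) + m * q^k"
      using e cT unfolding m by (simp add: power2_eq_square algebra_simps)
    ultimately have "card (S p) * q^2 = q^k * (q^2 - q + 1)" by simp
    then have "(card (S p) * q^2)^n = Y" unfolding Y_def by simp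
    then show ?thesis by (simp add: power_mult_distrib power_mult)
  qed
  have "card Bad \<le> (\<Sum>p\<in>P. card (amb n (S p)))" unfolding Bad_def by (rule card_UN_le[OF fP])
  also have "\<dots> = (\<Sum>p\<in>P. card (S p) ^ n)"
    by (intro sum.cong refl card_amb[THEN conjunct2]) (use fV in \<open>simp add: S_def\<close>)
  finally have "card Bad * q^(2*n) \<le> (\<Sum>p\<in>P. card (S p) ^ n) * q^(2*n)" by simp
  also have "\<dots> = (\<Sum>p\<in>P. card (S p) ^ n * q^(2*n))" by (simp add: sum_distrib_right)
  also have "\<dots> = card P * Y" using cS by simp
  also have "\<dots> < q^(2*k) * Y"
  proof -
    have "Y > 0" unfolding Y_def using q2 by (simp add: power2_eq_square)
    then show ?thesis using cP by simp
  qed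
  also have "q^(2*k) * Y = (q^(2*k) * (q^2 - q + 1)^n) * q^(k*n)"
    by (simp only: Y_def power_mult_distrib power_mult mult_ac)
  also have "\<dots> \<le> q^(2*n) * q^(k*n)" using cond unfolding q_def by simp
  finally have "card Bad < q^(k*n)" by (simp add: mult.commute)
  then have "card Bad < card Gs" using cGs by (simp add: power_mult)
  moreover have "finite Bad" unfolding Bad_def using fP
    by (intro finite_UN_I card_amb[THEN conjunct1]) (use fV in \<open>simp_all add: S_def\<close>)
  ultimately have "\<not> Gs \<subseteq> Bad" using card_mono not_le by blast
  then obtain G where G: "G \<in> Gs" "G \<notin> Bad" by blast
  show ?thesis
  proof (intro bexI[of _ G] ballI impI)
    show "G \<in> amb n (ambient k)" using G(1) unfolding Gs_def V_def by simp
    fix u v :: "nat \<Rightarrow> 'a" assume uv: "u \<in> ambient k" "v \<in> ambient k" "\<not> lin_dep2 u v"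
    then have "(u,v) \<in> P" unfolding P_def V_def by auto
    then have "G \<notin> amb n (S (u,v))" using G unfolding Bad_def by auto
    then obtain i where "i < n" "G i \<notin> S (u,v)" using G unfolding Gs_def amb_def by auto
    moreover have "G i \<in> V" using G \<open>i < n\<close> unfolding Gs_def amb_def by auto
    ultimately show "\<exists>i<n. dot k (G i) u = 0 \<and> dot k (G i) v \<noteq> 0" unfolding S_def by auto
  qed
qed



interpretation fs: vector_space fscale by (rule fscale_vector_space)

definition ev :: "nat \<Rightarrow> nat \<Rightarrow> 'a::field" where "ev j = (\<lambda>i. if i = j then 1 else 0)"

lemma sum_delta_mult: "(\<Sum>a<(k::nat). f a * (if i = a then 1 else 0)) = (if i < k then f i else (0::'a::field))"
proof -
  have "(\<Sum>a<k. f a * (if i = a then 1 else 0)) = (\<Sum>a<k. if a = i then f a else 0)"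
    by (rule sum.cong) auto
  then show ?thesis by (simp add: sum.delta[OF finite_lessThan])
qed

lemma ambient_subspace: "fs.subspace (ambient k)"
  unfolding fs.subspace_def by (auto simp: ambient_def fscale_def)

lemma ambient_span: "fs.span (ev ` {..<k}) = (ambient k :: (nat \<Rightarrow> 'a::field) set)"
proof
  show "fs.span (ev ` {..<k}) \<subseteq> (ambient k :: (nat \<Rightarrow> 'a) set)"
    by (rule fs.span_minimal[OF _ ambient_subspace]) (auto simp: ev_def ambient_def)
  show "(ambient k :: (nat \<Rightarrow> 'a) set) \<subseteq> fs.span (ev ` {..<k})"
  proof
    fix x :: "nat \<Rightarrow> 'a" assume x: "x \<in> ambient k"
    have "x = (\<Sum>j<k. fscale (x j) (ev j))"
    proof
      fix i
      show "x i = (\<Sum>j<k. fscale (x j) (ev j)) i"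
        using x by (cases "i < k") (auto simp: sum_fun_app fscale_def ev_def ambient_def sum_delta_mult)
    qed
    also have "\<dots> \<in> fs.span (ev ` {..<k})"
      by (intro fs.span_sum fs.span_scale fs.span_base) auto
    finally show "x \<in> fs.span (ev ` {..<k} :: (nat \<Rightarrow> 'a) set)" .
  qed
qed

lemma ev_inj: "inj (ev :: nat \<Rightarrow> nat \<Rightarrow> 'a::field)"
  by (rule injI) (metis ev_def one_neq_zero)

lemma ev_indep: "fs.independent (ev ` {..<k} :: (nat \<Rightarrow> 'a::field) set)"
proof
  assume "fs.dependent (ev ` {..<k} :: (nat \<Rightarrow> 'a) set)"
  then obtain c where c: "\<exists>w\<in>ev ` {..<k}. c w \<noteq> (0::'a)"
      "(\<Sum>w\<in>ev ` {..<k}. fscale (c w) w) = 0"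
    by (auto simp: fs.dependent_finite)
  then obtain j0 where j0: "j0 < k" "c (ev j0) \<noteq> 0" by auto
  have "0 = (\<Sum>w\<in>ev ` {..<k}. fscale (c w) w) j0" using c by simp
  also have "\<dots> = (\<Sum>j<k. c (ev j) * ev j j0)"
    by (simp add: sum_fun_app sum.reindex inj_on_subset[OF ev_inj] fscale_def)
  also have "\<dots> = c (ev j0)" using j0 unfolding ev_def by (simp only: sum_delta_mult) simp
  finally show False using j0 by simp
qed

definition Lmap :: "nat \<Rightarrow> (nat \<Rightarrow> nat \<Rightarrow> 'a) \<Rightarrow> (nat \<Rightarrow> 'a) \<Rightarrow> (nat \<Rightarrow> 'a::field)" where
  "Lmap k G u = (\<lambda>i. dot k (G i) u)"

lemma Lmap_linear: "Vector_Spaces.linear fscale fscale (Lmap k G)"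
  by unfold_locales (auto simp: Lmap_def dot_def fscale_def fun_eq_iff algebra_simps sum.distrib sum_distrib_left)

lemma supp_sub:
  assumes "c \<in> ambient n" "c' \<in> ambient n" "supp n c' \<subseteq> supp n c" "i < n" "c' i \<noteq> 0"
  shows "c i \<noteq> 0"
proof -
  have "Suc i \<in> supp n c'" using assms by (auto simp: supp_def)
  then have "Suc i \<in> supp n c" using assms by auto
  then show ?thesis by (simp add: supp_def)
qed

lemma code_exists:
  fixes n k :: nat
  assumes k1: "k \<noteq> 1"
    and cond: "CARD('a)^(2*k) * (CARD('a)^2 - CARD('a) + 1)^n \<le> CARD('a)^(2*n)"
  shows "\<exists>C :: (nat\<Rightarrow>'a::{finite,field}) set. linear_code n k C \<and> minimal_code n C"
proof -
  obtain G where G: "G \<in> amb n (ambient k :: (nat\<Rightarrow>'a) set)"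
    and good: "\<And>u v. u \<in> ambient k \<Longrightarrow> v\<in>ambient k \<Longrightarrow>
           \<not> lin_dep2 u v \<Longrightarrow> (\<exists>i<n. dot k (G i) u = 0 \<and> dot k (G i) v \<noteq> 0)"
    using good_exists[OF cond] by blast
  define L where "L = Lmap k G"
  interpret L: Vector_Spaces.linear fscale fscale L unfolding L_def by (rule Lmap_linear)
  define C where "C = L ` ambient k"
  have Camb: "C \<subseteq> ambient n"
  proof
    fix c assume "c \<in> C"
    then obtain u where "c = L u" unfolding C_def by auto
    moreover have "G i = 0" if "i \<ge> n" for i using G that by (simp add: amb_def)
    ultimately show "c \<in> ambient n" by (auto simp: ambient_def L_def Lmap_def dot_def)
  qed
  have sub: "fs.subspace C" unfolding C_def by (rule L.subspace_image[OF ambient_subspace])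
  have inj0: "u = 0" if u: "u \<in> ambient k" and Lu: "L u = 0" for u
  proof (rule ccontr)
    assume "u \<noteq> 0"
    then obtain j0 where j0: "u j0 \<noteq> 0" by (auto simp: fun_eq_iff func_zero)
    with u have j0k: "j0 < k" by (auto simp: ambient_def not_less[symmetric])
    define j' :: nat where "j' = (if j0 = 0 then 1 else 0)"
    have j': "j' < k" "j' \<noteq> j0" using j0k k1 by (auto simp: j'_def)
    have evk: "ev j' \<in> ambient k" using j' by (auto simp: ev_def ambient_def)
    have "\<not> lin_dep2 (ev j') u"
    proof
      assume "lin_dep2 (ev j') u"
      then obtain a b where ab: "a \<noteq> 0 \<or> b \<noteq> 0" "fscale a (ev j') + fscale b u = 0"
        unfolding lin_dep2_def by blast
      from fun_cong[OF ab(2), of j0] j' have "b * u j0 = 0" by (simp add: fscale_def ev_def)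
      then have b: "b = 0" using j0 by simp
      from fun_cong[OF ab(2), of j'] b have "a = 0" by (simp add: fscale_def ev_def)
      with ab b show False by simp
    qed
    from good[OF evk u this] obtain i where "dot k (G i) u \<noteq> 0" by auto
    moreover have "dot k (G i) u = L u i" by (simp add: L_def Lmap_def)
    ultimately show False using Lu by simp
  qed
  have inj: "inj_on L (ambient k)"
    using L.inj_on_iff_eq_0[OF ambient_subspace] inj0 by blast
  have "fs.independent (L ` ev ` {..<k})"
  proof
    assume "fs.dependent (L ` ev ` {..<k})"
    then have "fs.dependent (ev ` {..<k} :: (nat \<Rightarrow> 'a) set)"
      using L.dependent_inj_imageD inj ambient_span by metis
    with ev_indep show False by blast
  qed
  moreover have "C = fs.span (L ` ev ` {..<k})"
    unfolding C_def L.span_image ambient_span ..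
  ultimately have "fs.dim C = card (L ` ev ` {..<k})"
    using fs.dim_span_eq_card_independent by metis
  also have "\<dots> = k"
  proof -
    have "inj_on L (ev ` {..<k})" using inj ambient_span fs.span_superset by (metis inj_on_subset)
    moreover have "card (ev ` {..<k} :: (nat \<Rightarrow> 'a) set) = k"
      by (simp add: card_image[OF inj_on_subset[OF ev_inj subset_UNIV]])
    ultimately show ?thesis by (simp add: card_image)
  qed
  finally have dimC: "fs.dim C = k" .
  have minC: "minimal_code n C"
    unfolding minimal_code_def minimal_codeword_def
  proof (intro ballI impI conjI)
    fix c assume "c \<in> C" then show "c \<in> C" .
  next
    fix c c' assume c: "c \<in> C" and c0: "c \<noteq> 0" and c': "c' \<in> C" and ss: "supp n c' \<subseteq> supp n c"
    obtain u where u: "u \<in> ambient k" "c = L u" using c unfolding C_def by auto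
    obtain v where v: "v \<in> ambient k" "c' = L v" using c' unfolding C_def by auto
    show "lin_dep2 c c'"
    proof (cases "lin_dep2 u v")
      case True
      then obtain a b where ab: "a \<noteq> 0 \<or> b \<noteq> 0" "fscale a u + fscale b v = 0"
        unfolding lin_dep2_def by blast
      have "fscale a c + fscale b c' = L (fscale a u + fscale b v)"
        using u v by (simp add: L.add L.scale)
      also have "\<dots> = 0" using ab by simp
      finally show ?thesis unfolding lin_dep2_def using ab(1) by blast
    next
      case False
      from good[OF u(1) v(1) False] obtain i where i: "i < n" "dot k (G i) u = 0" "dot k (G i) v \<noteq> 0"
        by blast
      have "c' i \<noteq> 0" "c i = 0" using i u v by (auto simp: L_def Lmap_def)
      with supp_sub[OF _ _ ss i(1)] c c' Camb show ?thesis by auto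
    qed
  qed
  show ?thesis
    using Camb sub dimC minC unfolding linear_code_def by blast
qed



lemma real_cond:
  fixes q R :: real and k n :: nat
  assumes q: "q \<ge> 2" and kR: "real k \<le> R * real n"
    and R: "R \<le> 1/2 * log q (q^2 / (q^2 - q + 1))"
  shows "q^(2*k) * (q^2 - q + 1)^n \<le> q^(2*n)"
proof -
  define D where "D = q^2 - q + 1"
  have "q*(q-1) \<ge> 0" using q by simp
  then have D: "D > 0" unfolding D_def by (simp add: power2_eq_square algebra_simps)
  define X where "X = q^2 / D"
  have X: "X > 0" unfolding X_def using D q by simp
  have n0: "real n \<ge> 0" by simp
  have "real (2*k) \<le> 2 * (R * real n)" using kR by simp
  also have "\<dots> \<le> log q X * real n" using mult_right_mono[OF R n0] unfolding X_def D_def by simp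
  finally have le: "real (2*k) \<le> log q X * real n" .
  have "q^(2*k) = q powr real (2*k)" using q by (subst powr_realpow) auto
  also have "\<dots> \<le> q powr (log q X * real n)" using q le by (intro powr_mono) auto
  also have "\<dots> = (q powr log q X) powr real n" by (simp add: powr_powr)
  also have "\<dots> = X ^ n" using q X by (simp add: powr_realpow)
  also have "\<dots> = (q^2)^n / D^n" unfolding X_def by (simp add: power_divide)
  finally have "q^(2*k) * D^n \<le> (q^2)^n" using D by (simp add: pos_le_divide_eq)
  then show ?thesis unfolding D_def by (simp add: power_mult)
qed



theorem mainTheorem2:
  fixes R :: real
  assumes "0 \<le> R"
    and "R \<le> 1/2 * log (real CARD('a::{finite,field}))
                 ((real CARD('a))^2 / ((real CARD('a))^2 - real CARD('a) + 1))"
  shows "\<exists>(ns :: nat \<Rightarrow> nat) (ks :: nat \<Rightarrow> nat) (Cs :: nat \<Rightarrow> (nat \<Rightarrow> 'a) set).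
           (\<forall>m. 0 < ns m \<and> linear_code (ns m) (ks m) (Cs m) \<and> minimal_code (ns m) (Cs m)
                \<and> real (ks m) / real (ns m) \<le> 1/2 * log (real CARD('a))
                   ((real CARD('a))^2 / ((real CARD('a))^2 - real CARD('a) + 1)))
         \<and> filterlim ns at_top sequentially
         \<and> ((\<lambda>m. real (ks m) / real (ns m)) \<longlonglongrightarrow> R)"
proof -
  define Q where "Q = CARD('a)"
  have Q2: "Q \<ge> 2" unfolding Q_def
  proof -
    have "card {0::'a, 1} \<le> CARD('a)" by (intro card_mono) auto
    then show "CARD('a) \<ge> 2" by simp
  qed
  define Rm where "Rm = 1/2 * log (real CARD('a))
                   ((real CARD('a))^2 / ((real CARD('a))^2 - real CARD('a) + 1))"
  have R0: "0 \<le> R" and RR: "R \<le> Rm" using assms unfolding Rm_def by auto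
  define ns :: "nat \<Rightarrow> nat" where "ns m = Suc m" for m
  define fl where "fl m = nat \<lfloor>R * real (Suc m)\<rfloor>" for m
  define ks where "ks m = (if fl m = 1 then 0 else fl m)" for m
  have flR: "real (fl m) \<le> R * real (Suc m)" for m
    unfolding fl_def using R0 by (simp add: of_nat_nat)
  have flR2: "real (fl m) \<ge> R * real (Suc m) - 1" for m
  proof -
    have "R * real (Suc m) \<ge> 0" using R0 by simp
    then show ?thesis unfolding fl_def by linarith
  qed
  have ksR: "real (ks m) \<le> R * real (Suc m)" for m using flR[of m] R0 by (simp add: ks_def)
  have ksR2: "real (ks m) \<ge> real (fl m) - 1" for m by (simp add: ks_def)
  have code: "\<exists>C :: (nat\<Rightarrow>'a) set. linear_code (ns m) (ks m) C \<and> minimal_code (ns m) C" for m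
  proof (rule code_exists)
    show "ks m \<noteq> 1" by (simp add: ks_def)
    have "real Q ^ (2 * ks m) * (real Q ^ 2 - real Q + 1) ^ ns m \<le> real Q ^ (2 * ns m)"
      using real_cond[of "real Q" "ks m" R "ns m"] Q2 ksR[of m] RR unfolding ns_def Rm_def Q_def
      by simp
    moreover have "real (Q^2 - Q + 1) = real Q ^ 2 - real Q + 1"
      using Q2 by (simp add: of_nat_diff power2_eq_square)
    ultimately have "real (Q ^ (2 * ks m) * (Q^2 - Q + 1) ^ ns m) \<le> real (Q ^ (2 * ns m))"
      by (simp only: of_nat_mult of_nat_power)
    then show "CARD('a) ^ (2 * ks m) * (CARD('a)^2 - CARD('a) + 1) ^ ns m \<le> CARD('a) ^ (2 * ns m)"
      unfolding Q_def by (simp only: of_nat_le_iff)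
  qed
  have "\<exists>Cs :: nat \<Rightarrow> (nat \<Rightarrow> 'a) set. \<forall>m. linear_code (ns m) (ks m) (Cs m) \<and> minimal_code (ns m) (Cs m)"
    using code by (intro choice allI)
  then obtain Cs :: "nat \<Rightarrow> (nat \<Rightarrow> 'a) set" where Cs: "\<And>m. linear_code (ns m) (ks m) (Cs m) \<and> minimal_code (ns m) (Cs m)"
    by blast
  have rate: "real (ks m) / real (ns m) \<le> R" for m
    using ksR[of m] by (simp add: ns_def pos_divide_le_eq)
  have lim: "(\<lambda>m. real (ks m) / real (ns m)) \<longlonglongrightarrow> R"
  proof (rule tendsto_sandwich[of "\<lambda>m. R - 2 / real (Suc m)" _ _ "\<lambda>_. R"])
    show "\<forall>\<^sub>F m in sequentially. R - 2 / real (Suc m) \<le> real (ks m) / real (ns m)"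
    proof (rule always_eventually, rule allI)
      fix m
      have "real (ks m) \<ge> R * real (Suc m) - 2" using flR2[of m] ksR2[of m] by linarith
      then have "(R * real (Suc m) - 2) / real (Suc m) \<le> real (ks m) / real (Suc m)"
        by (intro divide_right_mono) auto
      moreover have "(R * real (Suc m) - 2) / real (Suc m) = R - 2 / real (Suc m)"
        by (simp add: field_simps)
      ultimately show "R - 2 / real (Suc m) \<le> real (ks m) / real (ns m)" by (simp add: ns_def)
    qed
    show "\<forall>\<^sub>F m in sequentially. real (ks m) / real (ns m) \<le> R" using rate by simp
    show "(\<lambda>_. R) \<longlonglongrightarrow> R" by simp
    have "(\<lambda>m. 2 / real (Suc m)) \<longlonglongrightarrow> 0"
      using LIMSEQ_Suc[OF lim_const_over_n[of 2]] by simp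
    then show "(\<lambda>m. R - 2 / real (Suc m)) \<longlonglongrightarrow> R"
      using tendsto_diff[OF tendsto_const[of R]] by fastforce
  qed
  have "filterlim ns at_top sequentially" unfolding ns_def by (rule filterlim_Suc)
  moreover have "\<forall>m. 0 < ns m \<and> linear_code (ns m) (ks m) (Cs m) \<and> minimal_code (ns m) (Cs m)
                \<and> real (ks m) / real (ns m) \<le> Rm"
    using Cs rate RR by (auto simp: ns_def intro: order_trans)
  ultimately show ?thesis using lim unfolding Rm_def by blast
qed


end
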